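(* Consider $n>1$ agents with states $\boldsymbol{x}_i(t)\in\mathbb{R}^d$ evolving by $\dot{\boldsymbol{x}}(t)=-L(t)\boldsymbol{x}(t)$, where $\boldsymbol{x}=[\boldsymbol{x}_1^\top,\dots,\boldsymbol{x}_n^\top]^\top\in\mathbb{R}^{dn}$ and $L(t)$ is the matrix-valued Laplacian of a matrix-weighted switching network $\mathcal{G}(t)$ satisfying Assumption 2 (described in the context). If the system achieves cluster consensus, namely there exists $\boldsymbol{x}^*\in\mathbb{R}^{dn}$ with $\lim_{t\to\infty}\boldsymbol{x}(t)=\boldsymbol{x}^*$, then $\lim_{t\to\infty}L(t)\boldsymbol{x}^*=\boldsymbol{0}$.
   Context: A matrix-weighted switching network $\mathcal{G}(t)=(\mathcal{V},\mathcal{E}(t),A(t))$ has node set $\mathcal{V}=\{1,\dots,n\}$ and edge set $\mathcal{E}(t)$; each edge $(i,j)\in\mathcal{E}(t)$ carries a symmetric weight $A_{ij}(t)\in\mathbb{R}^{d\times d}$ which is either positive (semi-)definite or negative (semi-)definite, with $A_{ij}(t)=A_{ji}(t)$, $A_{ii}(t)=0_{d\times d}$, and $A_{ij}(t)=0_{d\times d}$ if $(i,j)\notin\mathcal{E}(t)$. For such a weight, $|A_{ij}|=A_{ij}$ if $A_{ij}\succeq 0$ and $|A_{ij}|=-A_{ij}$ if $A_{ij}\preceq 0$; $\mathrm{sgn}(A_{ij})=1$ if $A_{ij}\succeq0$ (nonzero), $-1$ if $A_{ij}\preceq 0$ (nonzero), $0$ if $A_{ij}=0$. The agent dynamics are $\dot{\boldsymbol{x}}_i=-\sum_{j\in\mathcal{N}_i(t)}|A_{ij}(t)|(\boldsymbol{x}_i-\mathrm{sgn}(A_{ij}(t))\boldsymbol{x}_j)$,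 $\mathcal{N}_i(t)=\{j:(i,j)\in\mathcal{E}(t)\}$. With $A(t)=[A_{ij}(t)]\in\mathbb{R}^{dn\times dn}$ (block matrix) and $D(t)=\mathrm{diag}(D_1(t),\dots,D_n(t))$, $D_i(t)=\sum_{j\in\mathcal{N}_i(t)}|A_{ij}(t)|$, the matrix-valued Laplacian is $L(t)=D(t)-A(t)$, and the stacked dynamics read $\dot{\boldsymbol{x}}=-L(t)\boldsymbol{x}$. Assumption 1: there is a sequence $\{t_k\}_{k\in\mathbb{N}}$ with $t_0=0$, $t_k\to\infty$, $t_{k+1}-t_k\ge\alpha$ for some $\alpha>0$ and all $k$, and $\mathcal{G}(t)$ is constant on each $[t_k,t_{k+1})$. Assumption 2: Assumption 1 holds, and $\mathcal{G}(t)$ is always chosen from a finite set $\{\mathcal{G}_1,\dots,\mathcal{G}_M\}$, each $\mathcal{G}_i$ appearing infinitely many times in the sequence. Cluster consensus: there is a partition $\mathcal{V}_1,\dots,\mathcal{V}_l$ of $\mathcal{V}$ such that agents in the same part have the same limit $\lim_{t\to\infty}\boldsymbol{x}_i(t)$ and agents in different parts have different limits. *)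

theory Defs
  imports "HOL-Analysis.Analysis"
begin

text \<open>Matrix weights are d x d real matrices, type real^'d^'d; agents are indexed by a
finite type 'n; the stacked state lives in (real^'d)^'n (= R^{dn}).\<close>

definition psd_mat :: "real^'d^'d \<Rightarrow> bool" where
  "psd_mat M \<longleftrightarrow> (\<forall>v. 0 \<le> v \<bullet> (M *v v))"

definition nsd_mat :: "real^'d^'d \<Rightarrow> bool" where
  "nsd_mat M \<longleftrightarrow> (\<forall>v. v \<bullet> (M *v v) \<le> 0)"

definition sym_mat :: "real^'d^'d \<Rightarrow> bool" where
  "sym_mat M \<longleftrightarrow> transpose M = M"

definition mat_abs :: "real^'d^'d \<Rightarrow> real^'d^'d" where
  "mat_abs M = (if psd_mat M then M else - M)"

definition mat_sgn :: "real^'d^'d \<Rightarrow> real" where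
  "mat_sgn M = (if M = 0 then 0 else if psd_mat M then 1 else -1)"

text \<open>A matrix-weighted network on agents 'n, given by its weight function A i j
(edges are exactly the pairs with nonzero weight; pairs that are not edges carry 0).\<close>
definition matrix_weighted_network :: "('n \<Rightarrow> 'n \<Rightarrow> real^'d^'d) \<Rightarrow> bool" where
  "matrix_weighted_network A \<longleftrightarrow>
     (\<forall>i j. sym_mat (A i j) \<and> (psd_mat (A i j) \<or> nsd_mat (A i j)) \<and> A i j = A j i)
     \<and> (\<forall>i. A i i = 0)"

definition mlap :: "('n::finite \<Rightarrow> 'n \<Rightarrow> real^'d^'d) \<Rightarrow> (real^'d)^'n \<Rightarrow> (real^'d)^'n" where
  "mlap A x = (\<chi> i. (\<Sum>j\<in>UNIV. mat_abs (A i j)) *v (x $ i) - (\<Sum>j\<in>UNIV. A i j *v (x $ j)))"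

text \<open>Assumption 1 + Assumption 2 for a switching network G(t).\<close>
definition assumption2 :: "(real \<Rightarrow> 'n \<Rightarrow> 'n \<Rightarrow> real^'d^'d) \<Rightarrow> bool" where
  "assumption2 G \<longleftrightarrow>
     (\<exists>tk :: nat \<Rightarrow> real. \<exists>\<alpha>>0. \<exists>Gs.
        tk 0 = 0 \<and> filterlim tk at_top sequentially \<and>
        (\<forall>k. tk (Suc k) - tk k \<ge> \<alpha>) \<and>
        (\<forall>k. \<forall>t\<in>{tk k..<tk (Suc k)}. G t = G (tk k)) \<and>
        finite Gs \<and> (\<forall>H\<in>Gs. matrix_weighted_network H) \<and>
        (\<forall>t. G t \<in> Gs) \<and>
        (\<forall>H\<in>Gs. infinite {k. G (tk k) = H}))"

end

theory Submission
  imports Defs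
begin
lemma mlap_linear: "linear (mlap A)"
proof (rule linearI)
  fix x y show "mlap A (x + y) = mlap A x + mlap A y"
    by (simp add: mlap_def vec_eq_iff matrix_vector_right_distrib sum.distrib algebra_simps)
next
  fix r :: real and x show "mlap A (r *\<^sub>R x) = r *\<^sub>R mlap A x"
    by (simp add: mlap_def vec_eq_iff matrix_vector_mult_scaleR scaleR_sum_right algebra_simps)
qed
lemma mlap_bl: "bounded_linear (mlap A)"
  using mlap_linear linear_conv_bounded_linear by blast
lemma rmvt:
  fixes f :: "real \<Rightarrow> 'a::real_normed_vector"
  assumes ab: "a \<le> b" and cf: "continuous_on {a..b} f"
    and der: "\<And>s. s \<in> {a..<b} \<Longrightarrow> (f has_vector_derivative f' s) (at s within {s..})"
    and bnd: "\<And>s. s \<in> {a..<b} \<Longrightarrow> norm (f' s) \<le> M"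
  shows "norm (f b - f a) \<le> M * (b - a)"
proof -
  have key: "norm (f b - f a) \<le> (M + e) * (b - a)" if e: "e > 0" for e
  proof (rule ccontr)
    assume nb: "\<not> ?thesis"
    define g where "g s = norm (f s - f a) - (M+e)*(s-a)" for s
    define T where "T = {s\<in>{a..b}. g s > 0}"
    have bT: "b \<in> T" using nb ab by (auto simp: T_def g_def)
    define c where "c = Inf T"
    have bdd: "bdd_below T" unfolding bdd_below_def T_def by auto
    have cle: "c \<le> b" unfolding c_def using cInf_lower[OF bT bdd] .
    have ca: "a \<le> c" unfolding c_def using bT by (intro cInf_greatest) (auto simp: T_def)
    have below: "g u \<le> 0" if "u \<in> {a..<c}" for u
    proof -
      have "u \<notin> T" using cInf_lower[of u T] bdd that unfolding c_def by force
      then show ?thesis using that cle by (auto simp: T_def)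
    qed
    have contg: "continuous_on {a..b} g" using cf unfolding g_def by (auto intro!: continuous_intros)
    have Z: "closed ({a..b} \<inter> g -` {..0})"
      by (rule continuous_closed_preimage[OF contg]) auto
    have gc: "g c \<le> 0"
    proof (cases "c = a")
      case True then show ?thesis by (simp add: g_def)
    next
      case False
      then have ac: "a < c" using ca by simp
      have "{a..<c} \<subseteq> {a..b} \<inter> g -` {..0}" using below cle by auto
      then have "closure {a..<c} \<subseteq> {a..b} \<inter> g -` {..0}" using closure_minimal Z by blast
      then have "c \<in> g -` {..0}" using ac by (auto dest!: subsetD[of _ _ c])
      then show ?thesis by simp
    qed
    have cb: "c < b" using gc cle bT by (cases "c = b") (auto simp: T_def)
    have "(f has_derivative (\<lambda>h. h *\<^sub>R f' c)) (at c within {c..})"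
      using der[of c] ca cb by (simp add: has_vector_derivative_def)
    then obtain d where d: "d > 0" and
      dd: "\<And>y. y \<in> {c..} \<Longrightarrow> norm (y - c) < d \<Longrightarrow>
          norm (f y - f c - (y - c) *\<^sub>R f' c) \<le> e * norm (y - c)"
      using e unfolding has_derivative_within_alt by blast
    have "Inf T < c + d" using d c_def by simp
    then obtain y where yT: "y \<in> T" and yd: "y < c + d"
      using cInf_less_iff[of T "c+d"] bT bdd by auto
    have cy: "c \<le> y" using cInf_lower[OF yT bdd] c_def by simp
    have ync: "y \<noteq> c" using yT gc by (auto simp: T_def)
    have yb: "y \<le> b" using yT by (auto simp: T_def)
    have "norm (f y - f c - (y - c) *\<^sub>R f' c) \<le> e * (y - c)"
      using dd[of y] cy yd by auto
    moreover have "norm ((y - c) *\<^sub>R f' c) \<le> M * (y - c)"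
      using bnd[of c] ca cb cy by (simp add: mult.commute[of M] mult_left_mono)
    ultimately have "norm (f y - f c) \<le> (M + e) * (y - c)"
      using norm_triangle_ineq[of "f y - f c - (y - c) *\<^sub>R f' c" "(y - c) *\<^sub>R f' c"]
      by (simp add: algebra_simps)
    moreover have "norm (f y - f a) \<le> norm (f y - f c) + norm (f c - f a)"
      using norm_triangle_ineq[of "f y - f c" "f c - f a"] by simp
    ultimately have "g y \<le> g c" unfolding g_def by (simp add: algebra_simps)
    then show False using gc yT by (auto simp: T_def)
  qed
  show ?thesis
  proof (cases "a = b")
    case True then show ?thesis by simp
  next
    case False
    then have ba: "b - a > 0" using ab by simp
    show ?thesis
    proof (rule ccontr)
      assume "\<not> ?thesis"
      then have pos: "norm (f b - f a) - M * (b - a) > 0" by simp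
      define e where "e = (norm (f b - f a) - M * (b - a)) / (2 * (b - a))"
      have "e > 0" using pos ba by (simp add: e_def)
      from key[OF this] have "norm (f b - f a) \<le> M * (b - a) + e * (b - a)"
        by (simp add: algebra_simps)
      also have "e * (b - a) = (norm (f b - f a) - M * (b - a)) / 2"
        using ba unfolding e_def by (simp add: field_simps)
      finally have "norm (f b - f a) \<le> M * (b - a) + (norm (f b - f a) - M * (b - a)) / 2" .
      then show False using pos by argo
    qed
  qed
qed
theorem lemma3:
  fixes G :: "real \<Rightarrow> 'n::finite \<Rightarrow> 'n \<Rightarrow> real^'d^'d"
    and x :: "real \<Rightarrow> (real^'d)^'n"
    and xstar :: "(real^'d)^'n"
  assumes "CARD('n) > 1"
    and "assumption2 G"
    and "continuous_on {0..} x"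
    and "\<And>t. t \<ge> 0 \<Longrightarrow> (x has_vector_derivative (- mlap (G t) (x t))) (at t within {t..})"
    and "(x \<longlongrightarrow> xstar) at_top"
  shows "((\<lambda>t. mlap (G t) xstar) \<longlongrightarrow> 0) at_top"
proof -
  note cx = assms(3) and dx = assms(4) and lx = assms(5)
  obtain tk :: "nat \<Rightarrow> real" and \<alpha> Gs where al: "\<alpha> > 0" and tk0: "tk 0 = 0"
    and tklim: "filterlim tk at_top sequentially"
    and gap: "\<And>k. tk (Suc k) - tk k \<ge> \<alpha>"
    and const: "\<And>k t. t \<in> {tk k..<tk (Suc k)} \<Longrightarrow> G t = G (tk k)"
    and inGs: "\<And>t. G t \<in> Gs"
    and inf: "\<And>H. H \<in> Gs \<Longrightarrow> infinite {k. G (tk k) = H}"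
    using assms(2) unfolding assumption2_def by metis
  have tkmono: "tk k \<ge> 0" for k
  proof (induction k)
    case 0 then show ?case by (simp add: tk0)
  next
    case (Suc k) then show ?case using gap[of k] al by linarith
  qed
  have zero: "mlap H xstar = 0" if H: "H \<in> Gs" for H
  proof (rule ccontr)
    define c where "c = mlap H xstar"
    assume "mlap H xstar \<noteq> 0"
    then have cpos: "norm c > 0" by (simp add: c_def)
    define \<beta> where "\<beta> = \<alpha> / 2"
    have bpos: "\<beta> > 0" using al by (simp add: \<beta>_def)
    have l1: "((\<lambda>t. mlap H (x t)) \<longlongrightarrow> c) at_top"
      unfolding c_def by (rule bounded_linear.tendsto[OF mlap_bl lx])
    have "\<forall>\<^sub>F t in at_top. dist (mlap H (x t)) c < norm c / 4"
      using l1 cpos unfolding tendsto_iff by (metis divide_pos_pos zero_less_numeral)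
    moreover have "\<forall>\<^sub>F t in at_top. dist (x t) xstar < \<beta> * norm c / 8"
      using lx cpos bpos unfolding tendsto_iff by (metis divide_pos_pos zero_less_numeral mult_pos_pos)
    ultimately have "\<forall>\<^sub>F t in at_top. dist (mlap H (x t)) c < norm c / 4 \<and> dist (x t) xstar < \<beta> * norm c / 8"
      by (rule eventually_conj)
    then obtain T where T: "\<And>t. t \<ge> T \<Longrightarrow> dist (mlap H (x t)) c < norm c / 4 \<and> dist (x t) xstar < \<beta> * norm c / 8"
      unfolding eventually_at_top_linorder by blast
    obtain N where N: "\<And>k. k \<ge> N \<Longrightarrow> tk k \<ge> T"
      using tklim unfolding filterlim_at_top eventually_sequentially by blast
    obtain k where k: "k \<ge> N" "G (tk k) = H"
      using inf[OF H] by (metis (mono_tags, lifting) infinite_nat_iff_unbounded_le mem_Collect_eq)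
    define a where "a = tk k"
    have aT: "a \<ge> T" and a0: "a \<ge> 0" using N[OF k(1)] tkmono[of k] by (auto simp: a_def)
    define f where "f s = x s + s *\<^sub>R c" for s
    have "norm (f (a + \<beta>) - f a) \<le> (norm c / 4) * ((a + \<beta>) - a)"
    proof (rule rmvt[where f' = "\<lambda>s. - mlap H (x s) + c"])
      show "a \<le> a + \<beta>" using bpos by simp
      show "continuous_on {a..a + \<beta>} f" unfolding f_def
        by (intro continuous_intros continuous_on_subset[OF cx]) (use a0 in auto)
    next
      fix s assume s: "s \<in> {a..<a + \<beta>}"
      have "s < tk (Suc k)" using s gap[of k] by (simp add: a_def \<beta>_def)
      then have Gs: "G s = H" using const[of s k] s k(2) by (simp add: a_def)
      have "(x has_vector_derivative (- mlap H (x s))) (at s within {s..})"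
        using dx[of s] s a0 Gs by simp
      then show "(f has_vector_derivative (- mlap H (x s) + c)) (at s within {s..})"
        unfolding f_def by (auto intro!: derivative_eq_intros)
      show "norm (- mlap H (x s) + c) \<le> norm c / 4"
        using T[of s] s aT by (simp add: dist_norm norm_minus_commute)
    qed
    then have i1: "norm (x (a + \<beta>) - x a + \<beta> *\<^sub>R c) \<le> norm c / 4 * \<beta>"
      by (simp add: f_def algebra_simps)
    have "dist (x (a+\<beta>)) xstar < \<beta> * norm c / 8" "dist (x a) xstar < \<beta> * norm c / 8"
      using T[of a] T[of "a+\<beta>"] aT bpos by auto
    then have i2: "norm (x (a + \<beta>) - x a) < \<beta> * norm c / 4"
      using dist_triangle[of "x (a+\<beta>)" "x a" xstar] by (simp add: dist_norm dist_commute norm_minus_commute[of xstar])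
    have "\<beta> * norm c = norm (\<beta> *\<^sub>R c)" using bpos by simp
    also have "\<dots> \<le> norm (x (a + \<beta>) - x a + \<beta> *\<^sub>R c) + norm (x (a + \<beta>) - x a)"
      using norm_triangle_ineq4[of "x (a + \<beta>) - x a + \<beta> *\<^sub>R c" "x (a + \<beta>) - x a"] by simp
    finally have "\<beta> * norm c < \<beta> * norm c / 2" using i1 i2 by argo
    then show False using bpos cpos by simp
  qed
  have "mlap (G t) xstar = 0" for t using zero inGs by blast
  then show ?thesis by simp
qed
end
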